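(* There exist constants $c,C>0$, infinitely many $n$, and for each such $n$ a partial Boolean function $f_n:X_n\rightarrow\{0,1\}$ with $X_n\subseteq\{0,1\}^n$, such that $WUQ(f_n)\le C$ and $WUC(f_n)\ge c\log n$.
   Context: Query model: a classical randomized query algorithm adaptively queries input bits $x_i$ (each query costs one) and outputs a bit; a quantum query algorithm alternates input-independent unitaries with the oracle $O_x:|i,b,z\rangle\mapsto|i,b\oplus x_i,z\rangle$ and measures an output bit. For an algorithm whose minimum over $x\in X$ of the probability of outputting $f(x)$ is $p>1/2$, its bias is $\beta=p-1/2$ and its weakly unbounded cost is (number of queries) $+\log(1/(2\beta))$. $WUQ(f)$ (resp. $WUC(f)$) is the minimum weakly unbounded cost over quantum (resp. classical randomized) algorithms. $\log$ is base 2. *)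

theory Defs
  imports "HOL-Probability.Probability"
begin

text \<open>A partial Boolean function is a pair (X, f) with X a set of inputs of length n and
  f :: bool list => bool (only its values on X matter).\<close>

text \<open>Deterministic adaptive query algorithms = decision trees.  Node i l r queries x_i
  and continues in l if x_i = 0, in r if x_i = 1.\<close>

datatype dtree = Leaf bool | Node nat dtree dtree

fun dt_depth :: "dtree \<Rightarrow> nat" where
  "dt_depth (Leaf b) = 0"
| "dt_depth (Node i l r) = Suc (max (dt_depth l) (dt_depth r))"

fun dt_valid :: "nat \<Rightarrow> dtree \<Rightarrow> bool" where
  "dt_valid n (Leaf b) = True"
| "dt_valid n (Node i l r) = (i < n \<and> dt_valid n l \<and> dt_valid n r)"

fun dt_eval :: "dtree \<Rightarrow> bool list \<Rightarrow> bool" where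
  "dt_eval (Leaf b) x = b"
| "dt_eval (Node i l r) x = (if x ! i then dt_eval r x else dt_eval l x)"

text \<open>A randomized algorithm making (at most) T queries on inputs of length n is a
  probability distribution D over decision trees of depth at most T querying only
  positions < n.\<close>

definition WUC :: "nat \<Rightarrow> bool list set \<Rightarrow> (bool list \<Rightarrow> bool) \<Rightarrow> real" where
  "WUC n X f = Inf {real T + log 2 (1 / (2 * (p - 1/2))) | T (D :: dtree pmf) p.
      (\<forall>t \<in> set_pmf D. dt_depth t \<le> T \<and> dt_valid n t) \<and>
      1/2 < p \<and> p \<le> 1 \<and>
      (\<forall>x \<in> X. measure_pmf.prob D {t. dt_eval t x = f x} \<ge> p)}"

text \<open>Basis states |i,b,z> with i < n (index register), b a bit (answer register),
  z < m (workspace of dimension m).\<close>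

type_synonym qidx = "nat \<times> bool \<times> nat"

definition QI :: "nat \<Rightarrow> nat \<Rightarrow> qidx set" where
  "QI n m = {..<n} \<times> (UNIV :: bool set) \<times> {..<m}"

definition unitary_on :: "qidx set \<Rightarrow> (qidx \<Rightarrow> qidx \<Rightarrow> complex) \<Rightarrow> bool" where
  "unitary_on S U \<longleftrightarrow> (\<forall>j\<in>S. \<forall>k\<in>S.
      (\<Sum>i\<in>S. cnj (U i j) * U i k) = (if j = k then 1 else 0))"

definition apply_mat :: "qidx set \<Rightarrow> (qidx \<Rightarrow> qidx \<Rightarrow> complex) \<Rightarrow> (qidx \<Rightarrow> complex) \<Rightarrow> (qidx \<Rightarrow> complex)" where
  "apply_mat S U \<psi> = (\<lambda>i. \<Sum>j\<in>S. U i j * \<psi> j)"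

definition query_op :: "bool list \<Rightarrow> (qidx \<Rightarrow> complex) \<Rightarrow> (qidx \<Rightarrow> complex)" where
  "query_op x \<psi> = (\<lambda>(i, b, z). \<psi> (i, b \<noteq> x ! i, z))"

definition init_state :: "qidx \<Rightarrow> complex" where
  "init_state = (\<lambda>v. if v = (0, False, 0) then 1 else 0)"

text \<open>The algorithm U_0, O_x, U_1, O_x, ..., O_x, U_T (with Us = [U_1,...,U_T])
  applied to |0,0,0>.\<close>
definition qfinal :: "nat \<Rightarrow> nat \<Rightarrow> (qidx \<Rightarrow> qidx \<Rightarrow> complex) \<Rightarrow> (qidx \<Rightarrow> qidx \<Rightarrow> complex) list
    \<Rightarrow> bool list \<Rightarrow> (qidx \<Rightarrow> complex)" where
  "qfinal n m U0 Us x =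
     foldl (\<lambda>\<psi> U. apply_mat (QI n m) U (query_op x \<psi>)) (apply_mat (QI n m) U0 init_state) Us"

definition qprob :: "nat \<Rightarrow> nat \<Rightarrow> (qidx \<Rightarrow> qidx \<Rightarrow> complex) \<Rightarrow> (qidx \<Rightarrow> qidx \<Rightarrow> complex) list
    \<Rightarrow> bool list \<Rightarrow> bool \<Rightarrow> real" where
  "qprob n m U0 Us x c = (\<Sum>v\<in>QI n m. if fst (snd v) = c then (cmod (qfinal n m U0 Us x v))\<^sup>2 else 0)"

definition WUQ :: "nat \<Rightarrow> bool list set \<Rightarrow> (bool list \<Rightarrow> bool) \<Rightarrow> real" where
  "WUQ n X f = Inf {real (length Us) + log 2 (1 / (2 * (p - 1/2))) | m U0 Us p.
      0 < m \<and> unitary_on (QI n m) U0 \<and> (\<forall>U \<in> set Us. unitary_on (QI n m) U) \<and>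
      1/2 < p \<and> p \<le> 1 \<and>
      (\<forall>x \<in> X. qprob n m U0 Us x (f x) \<ge> p)}"

end

theory Submission
  imports Defs
begin
definition sg :: "bool \<Rightarrow> real" where "sg b = (if b then -1 else 1)"

lemma sg_mult: "sg a * sg b = sg (a \<noteq> b)" by (simp add: sg_def)
lemma sg_F[simp]: "sg False = 1" by (simp add: sg_def)
lemma sg_T[simp]: "sg True = -1" by (simp add: sg_def)
lemma abs_sg[simp]: "\<bar>sg b\<bar> = 1" by (simp add: sg_def)

fun ip :: "nat \<Rightarrow> nat \<Rightarrow> nat \<Rightarrow> bool" where
  "ip 0 i j = False"
| "ip (Suc k) i j = (ip k (i div 2) (j div 2) \<noteq> (odd i \<and> odd j))"

lemma ip_sym: "ip k i j = ip k j i"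
  by (induction k arbitrary: i j) auto

lemma ip_zero[simp]: "ip k 0 j = False"
  by (induction k arbitrary: j) auto

lemma sum_group: "(\<Sum>r<c*N. f r) = (\<Sum>r<N. \<Sum>e<c. f (c*r+e))" for f :: "nat \<Rightarrow> real"
proof -
  have "(\<Sum>r<N. \<Sum>e<c. f (c*r+e)) = (\<Sum>r<N. sum f {r*c..<r*c+c})"
  proof (rule sum.cong[OF refl])
    fix r
    have 1: "sum f {0 + r*c..<c + r*c} = (\<Sum>i\<in>{0..<c}. f (i + r*c))" by (rule sum.shift_bounds_nat_ivl)
    have 2: "(\<lambda>i. f (i + r*c)) = (\<lambda>e. f (c*r+e))" by (simp add: algebra_simps)
    have 3: "{0 + r*c..<c + r*c} = {r*c..<r*c+c}" by (simp add: algebra_simps)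
    show "(\<Sum>e<c. f (c*r+e)) = sum f {r*c..<r*c+c}" using 1 unfolding 2 3 by (simp add: atLeast0LessThan)
  qed
  also have "\<dots> = sum f {..<N*c}" by (rule sum.nat_group)
  finally show ?thesis by (simp add: mult.commute)
qed

lemma aux: "(if A then (2::real)^k else 0) * (1 + sg (\<not> B)) = (if A \<and> B then 2^Suc k else 0)"
  by (auto simp: sg_def)

lemma ortho: "(\<Sum>r<2^k. sg (ip k r q \<noteq> ip k r q')) = (if q mod 2^k = q' mod 2^k then 2^k else 0)"
proof (induction k arbitrary: q q')
  case 0 then show ?case by simp
next
  case (Suc k)
  have "(\<Sum>r<2^Suc k. sg (ip (Suc k) r q \<noteq> ip (Suc k) r q')) =
        (\<Sum>r<2^k. \<Sum>e<2. sg (ip (Suc k) (2*r+e) q \<noteq> ip (Suc k) (2*r+e) q'))"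
    using sum_group[of _ 2 "2^k"] by simp
  also have "\<dots> = (\<Sum>r<2^k. sg (ip k r (q div 2) \<noteq> ip k r (q' div 2)) * (1 + sg (odd q \<noteq> odd q')))"
  proof (intro sum.cong refl)
    fix r
    have h: "(\<Sum>e<(2::nat). h e) = h 0 + h 1" for h :: "nat \<Rightarrow> real"
      by (simp add: numeral_2_eq_2)
    have a: "(2*r+1) div 2 = (r::nat)" "(2*r) div 2 = r" by presburger+
    show "(\<Sum>e<2. sg (ip (Suc k) (2*r+e) q \<noteq> ip (Suc k) (2*r+e) q')) =
      sg (ip k r (q div 2) \<noteq> ip k r (q' div 2)) * (1 + sg (odd q \<noteq> odd q'))"
      unfolding h by (simp only: ip.simps a add_0_right) (cases "ip k r (q div 2)"; cases "ip k r (q' div 2)"; cases "odd q"; cases "odd q'"; simp add: sg_def)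
  qed
  also have "\<dots> = (if q div 2 mod 2^k = q' div 2 mod 2^k then 2^k else 0) * (1 + sg (odd q \<noteq> odd q'))"
    by (simp only: sum_distrib_right[symmetric] Suc.IH)
  also have "\<dots> = (if q mod 2^Suc k = q' mod 2^Suc k then 2^Suc k else 0)"
  proof -
    have e: "q mod 2^Suc k = 2 * (q div 2 mod 2^k) + q mod 2" "q' mod 2^Suc k = 2 * (q' div 2 mod 2^k) + q' mod 2"
      by (simp_all add: mod_mult2_eq)
    have eqc: "(q mod 2^Suc k = q' mod 2^Suc k) = (q div 2 mod 2^k = q' div 2 mod 2^k \<and> (odd q = odd q'))"
    proof -
      have g: "(2*a+u = 2*b+v) = (a=b \<and> (u=1) = (v=1))" if "u<2" "v<2" for a b u v :: nat
        using that by presburger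
      show ?thesis unfolding e odd_iff_mod_2_eq_one by (rule g) auto
    qed
    show ?thesis
      unfolding eqc by (rule aux)
  qed
  finally show ?case .
qed

lemma ip_lin: "\<exists>u < 2^k. \<forall>s. ip k u s = (ip k v s \<noteq> ip k z s)"
proof (induction k arbitrary: v z)
  case 0 then show ?case by simp
next
  case (Suc k)
  obtain u where u: "u < 2^k" "\<forall>s. ip k u s = (ip k (v div 2) s \<noteq> ip k (z div 2) s)"
    using Suc by blast
  define u' where "u' = 2*u + (if odd v \<noteq> odd z then 1 else 0)"
  have "u' < 2^Suc k" using u(1) by (auto simp: u'_def)
  moreover have "u' div 2 = u" "odd u' = (odd v \<noteq> odd z)" by (auto simp: u'_def)
  moreover have "\<forall>s. ip (Suc k) u' s = (ip (Suc k) v s \<noteq> ip (Suc k) z s)"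
  proof
    fix s
    show "ip (Suc k) u' s = (ip (Suc k) v s \<noteq> ip (Suc k) z s)"
      using u(2)[rule_format, of "s div 2"] calculation(2,3)
      by (cases "ip k (v div 2) (s div 2)"; cases "ip k (z div 2) (s div 2)"; cases "odd v"; cases "odd z"; cases "odd s"; simp)
  qed
  ultimately show ?case by blast
qed

fun gg :: "nat \<Rightarrow> nat \<Rightarrow> bool" where
  "gg 0 s = False"
| "gg (Suc m) s = (gg m (s div 4) \<noteq> (odd s \<and> odd (s div 2)))"

definition KK :: "nat \<Rightarrow> real" where
  "KK w = 1 + sg (odd w) + sg (odd (w div 2)) + sg (True \<noteq> (odd (w div 2) \<noteq> odd w))"

lemma abs_KK: "\<bar>KK w\<bar> = 2"
  unfolding KK_def by (cases "odd w"; cases "odd (w div 2)"; simp)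

lemma four_step: "(\<Sum>e<4. sg (gg (Suc m) (4*r+e) \<noteq> ip (2*Suc m) w (4*r+e))) =
   sg (gg m r \<noteq> ip (2*m) (w div 4) r) * KK w"
proof -
  have h: "(\<Sum>e<(4::nat). h e) = h 0 + h 1 + h 2 + h 3" for h :: "nat \<Rightarrow> real"
    by (simp add: eval_nat_numeral)
  have t: "2*Suc m = Suc (Suc (2*m))" by simp
  have d: "(4*r) div 4 = r" "(4*r+1) div 4 = r" "(4*r+2) div 4 = r" "(4*r+3) div 4 = r"
      "(4*r) div 2 div 2 = r" "(4*r+1) div 2 div 2 = r" "(4*r+2) div 2 div 2 = r" "(4*r+3) div 2 div 2 = r"
      "w div 2 div 2 = w div 4"
    by presburger+
  have o: "odd (4*r) = False" "odd (4*r+1) = True" "odd (4*r+2) = False" "odd (4*r+3) = True"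
      "odd ((4*r) div 2) = False" "odd ((4*r+1) div 2) = False" "odd ((4*r+2) div 2) = True" "odd ((4*r+3) div 2) = True"
    by presburger+
  show ?thesis
    unfolding h t ip.simps gg.simps d o add_0_right KK_def
    by (cases "gg m r"; cases "ip (2*m) (w div 4) r"; cases "odd w"; cases "odd (w div 2)"; simp)
qed

lemma fourier: "\<bar>\<Sum>s<4^m. sg (gg m s \<noteq> ip (2*m) w s)\<bar> = 2^m"
proof (induction m arbitrary: w)
  case 0 then show ?case by simp
next
  case (Suc m)
  have "(\<Sum>s<4^Suc m. sg (gg (Suc m) s \<noteq> ip (2*Suc m) w s)) =
     (\<Sum>r<4^m. \<Sum>e<4. sg (gg (Suc m) (4*r+e) \<noteq> ip (2*Suc m) w (4*r+e)))"
    using sum_group[of _ 4 "4^m"] by simp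
  also have "\<dots> = (\<Sum>r<4^m. sg (gg m r \<noteq> ip (2*m) (w div 4) r)) * KK w"
    by (simp only: four_step sum_distrib_right)
  finally show ?case using Suc.IH[of "w div 4"] by (simp add: abs_mult abs_KK)
qed



definition xs :: "nat \<Rightarrow> nat \<Rightarrow> bool list" where
  "xs k s = map (\<lambda>i. ip k i s) [0..<2^k]"

lemma xs_nth: "i < 2^k \<Longrightarrow> xs k s ! i = ip k i s"
  by (simp add: xs_def)

lemma length_xs[simp]: "length (xs k s) = 2^k"
  by (simp add: xs_def)

lemma tree_bound:
  assumes B: "\<And>w. \<bar>\<Sum>s<2^k. sg (\<Phi> s \<noteq> ip k w s)\<bar> \<le> B"
  shows "dt_valid (2^k) t \<Longrightarrow>
    \<bar>\<Sum>s<2^k. sg (\<Phi> s \<noteq> ip k w s) * sg (dt_eval t (xs k s))\<bar> \<le> 2^(dt_depth t) * B"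
proof (induction t arbitrary: w)
  case (Leaf b)
  have "\<bar>\<Sum>s<2^k. sg (\<Phi> s \<noteq> ip k w s) * sg b\<bar> = \<bar>\<Sum>s<2^k. sg (\<Phi> s \<noteq> ip k w s)\<bar>"
    by (simp add: sum_distrib_right[symmetric] abs_mult)
  then show ?case using B[of w] by simp
next
  case (Node i l r)
  have i: "i < 2^k" and vl: "dt_valid (2^k) l" and vr: "dt_valid (2^k) r" using Node.prems by auto
  obtain u where u: "\<forall>s. ip k u s = (ip k w s \<noteq> ip k i s)" using ip_lin by blast
  define P where "P s = sg (\<Phi> s \<noteq> ip k w s)" for s
  define Q where "Q s = sg (\<Phi> s \<noteq> ip k u s)" for s
  define L where "L s = sg (dt_eval l (xs k s))" for s
  define R where "R s = sg (dt_eval r (xs k s))" for s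
  have pt: "sg (\<Phi> s \<noteq> ip k w s) * sg (dt_eval (Node i l r) (xs k s)) =
      (P s * R s + P s * L s + Q s * L s - Q s * R s) / 2" if "s < 2^k" for s
    using u[rule_format, of s] xs_nth[OF i, of s]
    unfolding P_def Q_def L_def R_def
    by (cases "\<Phi> s"; cases "ip k w s"; cases "ip k i s"; cases "dt_eval l (xs k s)"; cases "dt_eval r (xs k s)"; simp)
  have "(\<Sum>s<2^k. sg (\<Phi> s \<noteq> ip k w s) * sg (dt_eval (Node i l r) (xs k s))) =
      ((\<Sum>s<2^k. P s * R s) + (\<Sum>s<2^k. P s * L s) + (\<Sum>s<2^k. Q s * L s) - (\<Sum>s<2^k. Q s * R s)) / 2"
  proof -
    have "(\<Sum>s<2^k. sg (\<Phi> s \<noteq> ip k w s) * sg (dt_eval (Node i l r) (xs k s))) =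
      (\<Sum>s<2^k. (P s * R s + P s * L s + Q s * L s - Q s * R s) / 2)"
      by (intro sum.cong refl pt) simp
    also have "\<dots> = ((\<Sum>s<2^k. P s * R s) + (\<Sum>s<2^k. P s * L s) + (\<Sum>s<2^k. Q s * L s) - (\<Sum>s<2^k. Q s * R s)) / 2"
      by (simp only: sum_divide_distrib[symmetric] sum.distrib sum_subtractf)
    finally show ?thesis .
  qed
  moreover have "\<bar>\<Sum>s<2^k. P s * R s\<bar> \<le> 2^(dt_depth r) * B" using Node.IH(2)[OF vr, of w] by (simp add: P_def R_def)
  moreover have "\<bar>\<Sum>s<2^k. Q s * R s\<bar> \<le> 2^(dt_depth r) * B" using Node.IH(2)[OF vr, of u] by (simp add: Q_def R_def)
  moreover have "\<bar>\<Sum>s<2^k. P s * L s\<bar> \<le> 2^(dt_depth l) * B" using Node.IH(1)[OF vl, of w] by (simp add: P_def L_def)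
  moreover have "\<bar>\<Sum>s<2^k. Q s * L s\<bar> \<le> 2^(dt_depth l) * B" using Node.IH(1)[OF vl, of u] by (simp add: Q_def L_def)
  moreover have B0: "0 \<le> B" using B[of w] by linarith
  moreover have "2^(dt_depth l) * B \<le> 2^(max (dt_depth l) (dt_depth r)) * B"
    "2^(dt_depth r) * B \<le> 2^(max (dt_depth l) (dt_depth r)) * B"
    using B0 by (auto intro!: mult_right_mono power_increasing)
  ultimately show ?case by (simp add: abs_le_iff)
qed

lemma count_bound:
  assumes "dt_valid (4^m) t" "dt_depth t \<le> T"
  shows "(\<Sum>s<4^m. if dt_eval t (xs (2*m) s) = gg m s then 1 else 0) \<le> (4^m + 2^T * 2^m) / (2::real)"
proof -
  have n: "(4::nat)^m = 2^(2*m)" by (simp add: power_mult)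
  have B: "\<bar>\<Sum>s<2^(2*m). sg (gg m s \<noteq> ip (2*m) w s)\<bar> \<le> 2^m" for w
    using fourier[of m w] unfolding n by simp
  have tb: "\<bar>\<Sum>s<2^(2*m). sg (gg m s \<noteq> ip (2*m) 0 s) * sg (dt_eval t (xs (2*m) s))\<bar> \<le> 2^(dt_depth t) * 2^m"
    using tree_bound[OF B, of t 0] assms(1) unfolding n by simp
  have "2^(dt_depth t) * (2::real)^m \<le> 2^T * 2^m"
    using assms(2) by (intro mult_right_mono power_increasing) auto
  with tb have tb': "(\<Sum>s<2^(2*m). sg (gg m s \<noteq> ip (2*m) 0 s) * sg (dt_eval t (xs (2*m) s))) \<le> 2^T * 2^m"
    by linarith
  have pt: "(if dt_eval t (xs (2*m) s) = gg m s then 1 else 0) =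
     (1 + sg (gg m s \<noteq> ip (2*m) 0 s) * sg (dt_eval t (xs (2*m) s))) / (2::real)" for s
    by (cases "gg m s"; cases "dt_eval t (xs (2*m) s)"; simp)
  have "(\<Sum>s<4^m. if dt_eval t (xs (2*m) s) = gg m s then 1 else 0) =
     (2^(2*m) + (\<Sum>s<2^(2*m). sg (gg m s \<noteq> ip (2*m) 0 s) * sg (dt_eval t (xs (2*m) s)))) / (2::real)"
    unfolding n pt by (simp add: sum.distrib sum_divide_distrib[symmetric])
  also have "\<dots> \<le> (4^m + 2^T * 2^m) / 2"
    using tb' by (simp add: power_mult)
  finally show ?thesis .
qed

function build :: "nat \<Rightarrow> (bool list \<Rightarrow> bool) \<Rightarrow> nat \<Rightarrow> bool list \<Rightarrow> dtree" where
  "build n f j acc = (if j < n then Node j (build n f (Suc j) (acc @ [False])) (build n f (Suc j) (acc @ [True]))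
     else Leaf (f acc))"
  by pat_completeness auto
termination by (relation "Wellfounded.measure (\<lambda>(n,f,j,acc). n - j)") auto

declare build.simps[simp del]

lemma build_props:
  "dt_valid n (build n f j acc) \<and> dt_depth (build n f j acc) \<le> n - j \<and>
   (\<forall>x. length x = n \<and> j \<le> n \<and> acc = take j x \<longrightarrow> dt_eval (build n f j acc) x = f x)"
proof (induction n f j acc rule: build.induct)
  case (1 n f j acc)
  show ?case
  proof (cases "j < n")
    case True
    have IH1: "dt_valid n (build n f (Suc j) (acc @ [False])) \<and> dt_depth (build n f (Suc j) (acc @ [False])) \<le> n - Suc j \<and>
      (\<forall>x. length x = n \<and> Suc j \<le> n \<and> acc @ [False] = take (Suc j) x \<longrightarrow> dt_eval (build n f (Suc j) (acc @ [False])) x = f x)"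
      using 1(1) True by blast
    have IH2: "dt_valid n (build n f (Suc j) (acc @ [True])) \<and> dt_depth (build n f (Suc j) (acc @ [True])) \<le> n - Suc j \<and>
      (\<forall>x. length x = n \<and> Suc j \<le> n \<and> acc @ [True] = take (Suc j) x \<longrightarrow> dt_eval (build n f (Suc j) (acc @ [True])) x = f x)"
      using 1(2) True by blast
    have e: "build n f j acc = Node j (build n f (Suc j) (acc @ [False])) (build n f (Suc j) (acc @ [True]))"
      using True by (subst build.simps) simp
    have ev: "dt_eval (build n f j acc) x = f x" if "length x = n" "acc = take j x" for x
    proof -
      have tk: "take (Suc j) x = acc @ [x ! j]" using that True by (simp add: take_Suc_conv_app_nth)
      show ?thesis
        using IH1 IH2 that True tk unfolding e by (cases "x ! j") auto
    qed
    show ?thesis using IH1 IH2 True ev unfolding e by auto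
  next
    case False
    have e: "build n f j acc = Leaf (f acc)" using False by (subst build.simps) simp
    show ?thesis using False unfolding e by auto
  qed
qed

lemma build_correct:
  assumes "X \<subseteq> {x. length x = n}"
  shows "\<exists>t. dt_valid n t \<and> dt_depth t \<le> n \<and> (\<forall>x\<in>X. dt_eval t x = f x)"
  using build_props[of n f 0 "[]"] assms by (intro exI[of _ "build n f 0 []"]) auto

lemma WUC_nonempty:
  assumes "X \<subseteq> {x. length x = n}"
  shows "real n + log 2 (1 / (2 * (1 - 1/2))) \<in> {real T + log 2 (1 / (2 * (p - 1/2))) | T (D :: dtree pmf) p.
      (\<forall>t \<in> set_pmf D. dt_depth t \<le> T \<and> dt_valid n t) \<and>
      1/2 < p \<and> p \<le> 1 \<and>
      (\<forall>x \<in> X. measure_pmf.prob D {t. dt_eval t x = f x} \<ge> p)}"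
proof -
  obtain t where t: "dt_valid n t" "dt_depth t \<le> n" "\<forall>x\<in>X. dt_eval t x = f x"
    using build_correct[OF assms] by blast
  have "\<forall>x\<in>X. measure_pmf.prob (return_pmf t) {t. dt_eval t x = f x} \<ge> 1"
    using t(3) by (simp add: measure_return)
  then show ?thesis using t(1,2)
    by (intro CollectI exI[of _ n] exI[of _ "return_pmf t"] exI[of _ 1]) auto
qed

definition XX :: "nat \<Rightarrow> bool list set" where "XX m = xs (2*m) ` {..<4^m}"
definition FF :: "nat \<Rightarrow> bool list \<Rightarrow> bool" where
  "FF m x = (\<exists>s<4^m. x = xs (2*m) s \<and> gg m s)"

lemma xs_inj: assumes "xs k s = xs k s'" "s < 2^k" "s' < 2^k" shows "s = s'"
proof -
  have "\<forall>r<2^k. ip k r s = ip k r s'"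
    using assms(1) xs_nth by metis
  then have "(\<Sum>r<2^k. sg (ip k r s \<noteq> ip k r s')) = 2^k" by simp
  then have "s mod 2^k = s' mod 2^k" using ortho[of k s s'] by (auto split: if_splits)
  then show ?thesis using assms(2,3) by simp
qed

lemma FF_xs: "s < 4^m \<Longrightarrow> FF m (xs (2*m) s) = gg m s"
  unfolding FF_def using xs_inj[of "2*m"] by (auto simp: power_mult)

lemma XX_len: "XX m \<subseteq> {x. length x = 4^m}"
  by (auto simp: XX_def power_mult)

lemma qstep:
  fixes p :: real and T m :: nat
  assumes main: "4^m * p \<le> (4^m + 2^T * 2^m) / 2" and p: "1/2 < p"
  shows "real m \<le> real T + log 2 (1 / (2 * (p - 1/2)))"
proof -
  define q where "q = 2 * (p - 1/2)"
  have q0: "0 < q" using p by (simp add: q_def)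
  have "4^m * q \<le> 2^T*2^m" using main unfolding q_def by (simp add: algebra_simps)
  moreover have "(4::real)^m = 2^m * 2^m" by (simp add: power_mult_distrib[symmetric])
  ultimately have "q * 2^m \<le> 2^T" by (simp add: mult.assoc mult.commute)
  then have "q \<le> 2^T / 2^m" by (simp add: pos_le_divide_eq)
  also have "(2::real)^T / 2^m = 2 powr (real T - real m)"
    by (simp add: powr_diff powr_realpow)
  finally have "log 2 q \<le> real T - real m"
    using q0 by (simp add: log_le_iff)
  then have "log 2 (1 / q) \<ge> real m - real T"
    using q0 by (simp add: log_divide)
  then show ?thesis unfolding q_def[symmetric] by simp
qed

definition WUCset :: "nat \<Rightarrow> bool list set \<Rightarrow> (bool list \<Rightarrow> bool) \<Rightarrow> real set" where
  "WUCset n X f = {real T + log 2 (1 / (2 * (p - 1/2))) | T (D :: dtree pmf) p.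
      (\<forall>t \<in> set_pmf D. dt_depth t \<le> T \<and> dt_valid n t) \<and>
      1/2 < p \<and> p \<le> 1 \<and>
      (\<forall>x \<in> X. measure_pmf.prob D {t. dt_eval t x = f x} \<ge> p)}"

lemma WUC_eq: "WUC n X f = Inf (WUCset n X f)"
  unfolding WUC_def WUCset_def by (rule refl)

lemma WUCset_mem: "c \<in> WUCset n X f \<longleftrightarrow> (\<exists>T (D :: dtree pmf) p. c = real T + log 2 (1 / (2 * (p - 1/2))) \<and>
      (\<forall>t \<in> set_pmf D. dt_depth t \<le> T \<and> dt_valid n t) \<and>
      1/2 < p \<and> p \<le> 1 \<and>
      (\<forall>x \<in> X. measure_pmf.prob D {t. dt_eval t x = f x} \<ge> p))"
  unfolding WUCset_def by (rule mem_Collect_eq)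

lemma WUCset_ne: "WUCset (4^m) (XX m) (FF m) \<noteq> {}"
proof -
  have "real (4^m) + log 2 (1 / (2 * (1 - 1/2))) \<in> WUCset (4^m) (XX m) (FF m)"
    unfolding WUCset_def by (rule WUC_nonempty[OF XX_len])
  then show ?thesis by (rule ex_in_conv[THEN iffD1, OF exI])
qed

lemma WUC_lower: "WUC (4^m) (XX m) (FF m) \<ge> real m"
  unfolding WUC_eq
proof (rule cInf_greatest[OF WUCset_ne])
  fix c assume "c \<in> WUCset (4^m) (XX m) (FF m)"
  then obtain T D p where c: "c = real T + log 2 (1 / (2 * (p - 1/2)))"
    and D: "\<forall>t \<in> set_pmf D. dt_depth t \<le> T \<and> dt_valid (4^m) t"
    and p: "1/2 < p" "p \<le> 1"
    and pr: "\<forall>x \<in> XX m. measure_pmf.prob D {t. dt_eval t x = FF m x} \<ge> p"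
    unfolding WUCset_mem by blast
  define A where "A s = {t. dt_eval t (xs (2*m) s) = gg m s}" for s
  have ps: "p \<le> measure_pmf.prob D (A s)" if "s < 4^m" for s
    using pr[rule_format, of "xs (2*m) s"] that FF_xs[OF that] by (auto simp: XX_def A_def)
  have "real (4^m) * p = (\<Sum>s<(4::nat)^m. p)" by simp
  also have "\<dots> \<le> (\<Sum>s<4^m. measure_pmf.prob D (A s))" by (intro sum_mono ps) auto
  also have "\<dots> = (\<Sum>s<4^m. measure_pmf.expectation D (indicator (A s)))" by simp
  also have "\<dots> = measure_pmf.expectation D (\<lambda>t. \<Sum>s<4^m. indicator (A s) t)"
    by (subst Bochner_Integration.integral_sum) (auto intro: measure_pmf.integrable_const_bound[where B=1])
  also have "\<dots> \<le> measure_pmf.expectation D (\<lambda>t. (4^m + 2^T * 2^m) / (2::real))"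
  proof (rule integral_mono_AE)
    show "integrable (measure_pmf D) (\<lambda>t. \<Sum>s<4^m. indicator (A s) t :: real)"
      by (intro Bochner_Integration.integrable_sum) (simp add: less_top[symmetric])
    show "integrable (measure_pmf D) (\<lambda>t. (4^m + 2^T * 2^m) / (2::real))" by simp
    show "AE t in measure_pmf D. (\<Sum>s<4^m. indicator (A s) t) \<le> (4^m + 2^T * 2^m) / (2::real)"
      unfolding AE_measure_pmf_iff
    proof
      fix t assume "t \<in> set_pmf D"
      then have "dt_valid (4^m) t" "dt_depth t \<le> T" using D by auto
      note cb = count_bound[OF this]
      have eq: "(\<Sum>s<4^m. indicator (A s) t :: real) = (\<Sum>s<4^m. if dt_eval t (xs (2*m) s) = gg m s then 1 else 0)"
        by (rule sum.cong[OF refl]) (simp add: A_def indicator_def)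
      show "(\<Sum>s<4^m. indicator (A s) t) \<le> (4^m + 2^T * 2^m) / (2::real)"
        unfolding eq by (rule cb)
    qed
  qed
  also have "\<dots> = (4^m + 2^T * 2^m) / 2" by simp
  finally have main: "4^m * p \<le> (4^m + 2^T * 2^m) / (2::real)" by simp
  show "real m \<le> c" unfolding c by (rule qstep[OF main p(1)])
qed

lemma sum_QI: "(\<Sum>v\<in>QI n 1. F v) = (\<Sum>i<n. F (i,False,0) + F (i,True,0))"
proof -
  have "QI n 1 = (\<lambda>i. (i,False,0)) ` {..<n} \<union> (\<lambda>i. (i,True,0)) ` {..<n}"
    unfolding QI_def by (auto simp: image_iff)
  then have "(\<Sum>v\<in>QI n 1. F v) = (\<Sum>v\<in>(\<lambda>i. (i,False,0)) ` {..<n}. F v) + (\<Sum>v\<in>(\<lambda>i. (i,True,0)) ` {..<n}. F v)"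
    by (simp only:) (rule sum.union_disjoint, auto)
  also have "\<dots> = (\<Sum>i<n. F (i,False,0)) + (\<Sum>i<n. F (i,True,0))"
    by (subst sum.reindex, simp add: inj_on_def)+ simp
  finally show ?thesis by (simp add: sum.distrib)
qed

definition Hm :: "nat \<Rightarrow> bool \<Rightarrow> (nat \<Rightarrow> bool) \<Rightarrow> qidx \<Rightarrow> qidx \<Rightarrow> complex" where
  "Hm k \<alpha> \<beta> r q = complex_of_real (sg (ip k (fst r) (fst q)) * sg ((fst (snd q) \<noteq> \<alpha>) \<and> (fst (snd r) \<noteq> \<beta> (fst r))) / sqrt (2 * 2^k))"

lemma pt_real: fixes b1 b2 al ga :: bool
  shows "sg P1 * sg ((b1 \<noteq> al) \<and> (False \<noteq> ga)) / d * (sg P2 * sg ((b2 \<noteq> al) \<and> (False \<noteq> ga)) / d) +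
   sg P1 * sg ((b1 \<noteq> al) \<and> (True \<noteq> ga)) / d * (sg P2 * sg ((b2 \<noteq> al) \<and> (True \<noteq> ga)) / d) =
   sg (P1 \<noteq> P2) * (if b1 = b2 then 2 else 0) / (d*d)"
  by (cases b1; cases b2; cases al; cases ga; cases P1; cases P2) (simp_all add: sg_def field_simps)

lemma unitary_Hm: "unitary_on (QI (2^k) 1) (Hm k al be)"
  unfolding unitary_on_def
proof (intro ballI)
  fix q q' assume q: "q \<in> QI (2^k) 1" and q': "q' \<in> QI (2^k) 1"
  obtain a b where qa: "q = (a,b,0)" "a < 2^k" using q by (auto simp: QI_def)
  obtain a2 b2 where qa': "q' = (a2,b2,0)" "a2 < 2^k" using q' by (auto simp: QI_def)
  define s where "s = sqrt (2 * 2^k :: real)"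
  have ss: "s * s = 2 * 2^k" unfolding s_def by simp
  have "(\<Sum>i\<in>(QI (2^k) 1). cnj (Hm k al be i q) * Hm k al be i q') =
     (\<Sum>j<2^k. complex_of_real (sg (ip k j a \<noteq> ip k j a2) * (if b = b2 then 2 else 0) / (s * s)))"
    unfolding sum_QI
  proof (intro sum.cong refl)
    fix j
    have "cnj (Hm k al be (j,False,0) q) * Hm k al be (j,False,0) q' + cnj (Hm k al be (j,True,0) q) * Hm k al be (j,True,0) q'
      = complex_of_real (sg (ip k j a) * sg ((b\<noteq>al) \<and> (False \<noteq> be j)) / s * (sg (ip k j a2) * sg ((b2\<noteq>al) \<and> (False \<noteq> be j)) / s) +
          sg (ip k j a) * sg ((b\<noteq>al) \<and> (True \<noteq> be j)) / s * (sg (ip k j a2) * sg ((b2\<noteq>al) \<and> (True\<noteq>be j)) / s))"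
      unfolding Hm_def qa qa' s_def[symmetric]
      by (simp only: fst_conv snd_conv complex_cnj_complex_of_real complex_cnj_mult complex_cnj_divide of_real_add of_real_mult of_real_divide)
    also have "\<dots> = complex_of_real (sg (ip k j a \<noteq> ip k j a2) * (if b = b2 then 2 else 0) / (s * s))"
      by (simp only: pt_real)
    finally show "cnj (Hm k al be (j,False,0) q) * Hm k al be (j,False,0) q' + cnj (Hm k al be (j,True,0) q) * Hm k al be (j,True,0) q'
      = complex_of_real (sg (ip k j a \<noteq> ip k j a2) * (if b = b2 then 2 else 0) / (s * s))" .
  qed
  also have "\<dots> = complex_of_real ((if b = b2 then 2 else 0) / (s * s) * (\<Sum>j<2^k. sg (ip k j a \<noteq> ip k j a2)))"
    by (simp add: sum_distrib_left mult.commute)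
  also have "\<dots> = (if q = q' then 1 else 0)"
    unfolding ortho ss using qa qa' by auto
  finally show "(\<Sum>i\<in>(QI (2^k) 1). cnj (Hm k al be i q) * Hm k al be i q') = (if q = q' then 1 else 0)" .
qed


lemma ip_zero2[simp]: "ip k i 0 = False"
  using ip_zero ip_sym by metis

lemma apply_init:
  assumes "(0,False,0) \<in> QI n 1"
  shows "apply_mat (QI n 1) U init_state r = U r (0,False,0)"
proof -
  have fin: "finite (QI n 1)" unfolding QI_def by simp
  have "apply_mat (QI n 1) U init_state r = (\<Sum>j\<in>QI n 1. if j = (0,False,0) then U r j else 0)"
    unfolding apply_mat_def init_state_def by (intro sum.cong refl) simp
  also have "\<dots> = U r (0,False,0)" using fin assms by simp
  finally show ?thesis .
qed

lemma pt_real2: fixes X C :: bool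
  shows "sg P * sg (False \<and> C) / d * (sg (False \<noteq> X) / d) + sg P * sg (True \<and> C) / d * (sg (True \<noteq> X) / d)
   = sg (P \<noteq> X) * (if C then 2 else 0) / (d * d)"
  by (cases P; cases X; cases C) (simp_all add: sg_def field_simps)

definition U0 :: "nat \<Rightarrow> qidx \<Rightarrow> qidx \<Rightarrow> complex" where "U0 k = Hm k True (\<lambda>_. False)"
definition U1 :: "nat \<Rightarrow> qidx \<Rightarrow> qidx \<Rightarrow> complex" where "U1 m = Hm (2*m) False (\<lambda>j. \<not> gg m j)"

lemma psi2:
  assumes s: "s < 2^(2*m)" and j: "j < 2^(2*m)"
  shows "qfinal (2^(2*m)) 1 (U0 (2*m)) [U1 m] (xs (2*m) s) (j,c,z) = (if c = gg m j \<and> j = s then 1 else 0)"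
proof -
  define k where "k = 2*m"
  define d where "d = sqrt (2 * 2^k :: real)"
  have dd: "d * d = 2 * 2^k" unfolding d_def by simp
  have init: "(0,False,0) \<in> QI (2^k) 1" by (simp add: QI_def)
  define \<psi>1 where "\<psi>1 = query_op (xs k s) (apply_mat (QI (2^k) 1) (U0 k) init_state)"
  have p1: "\<psi>1 (i,b,0) = complex_of_real (sg (b \<noteq> ip k i s) / d)" if "i < 2^k" for i b
    unfolding \<psi>1_def query_op_def apply_init[OF init] using that
    by (simp add: U0_def Hm_def d_def[symmetric] xs_nth sg_def)
  have "qfinal (2^k) 1 (U0 k) [U1 m] (xs k s) (j,c,z) = apply_mat (QI (2^k) 1) (U1 m) \<psi>1 (j,c,z)"
    unfolding qfinal_def \<psi>1_def by simp
  also have "\<dots> = (\<Sum>i<2^k. complex_of_real (sg (ip k i j \<noteq> ip k i s) * (if c \<noteq> (\<not> gg m j) then 2 else 0) / (d * d)))"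
    unfolding apply_mat_def sum_QI
  proof (intro sum.cong refl)
    fix i :: nat assume i: "i \<in> {..<2^k}"
    have "U1 m (j,c,z) (i,False,0) * \<psi>1 (i,False,0) + U1 m (j,c,z) (i,True,0) * \<psi>1 (i,True,0) =
      complex_of_real (sg (ip k i j) * sg (False \<and> (c \<noteq> (\<not> gg m j))) / d * (sg (False \<noteq> ip k i s) / d) +
        sg (ip k i j) * sg (True \<and> (c \<noteq> (\<not> gg m j))) / d * (sg (True \<noteq> ip k i s) / d))"
      unfolding p1[OF i[simplified]] U1_def Hm_def k_def[symmetric] d_def[symmetric]
      by (simp only: fst_conv snd_conv ip_sym[of k j i] of_real_add of_real_mult of_real_divide simp_thms)
    also have "\<dots> = complex_of_real (sg (ip k i j \<noteq> ip k i s) * (if c \<noteq> (\<not> gg m j) then 2 else 0) / (d * d))"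
      by (simp only: pt_real2)
    finally show "U1 m (j,c,z) (i,False,0) * \<psi>1 (i,False,0) + U1 m (j,c,z) (i,True,0) * \<psi>1 (i,True,0) =
      complex_of_real (sg (ip k i j \<noteq> ip k i s) * (if c \<noteq> (\<not> gg m j) then 2 else 0) / (d * d))" .
  qed
  also have "\<dots> = complex_of_real ((if c \<noteq> (\<not> gg m j) then 2 else 0) / (d * d) * (\<Sum>i<2^k. sg (ip k i j \<noteq> ip k i s)))"
    by (simp add: sum_distrib_left mult.commute)
  also have "\<dots> = (if c = gg m j \<and> j = s then 1 else 0)"
    unfolding ortho dd using s j by (auto simp: k_def)
  finally show ?thesis unfolding k_def .
qed


lemma qprob_one:
  assumes s: "s < 4^m"
  shows "qprob (4^m) 1 (U0 (2*m)) [U1 m] (xs (2*m) s) (FF m (xs (2*m) s)) = 1"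
proof -
  have n: "(4::nat)^m = 2^(2*m)" by (simp add: power_mult)
  have s': "s < 2^(2*m)" using s n by simp
  have "qprob (4^m) 1 (U0 (2*m)) [U1 m] (xs (2*m) s) (FF m (xs (2*m) s)) =
    (\<Sum>j<2^(2*m). (if False = gg m s then (cmod (qfinal (2^(2*m)) 1 (U0 (2*m)) [U1 m] (xs (2*m) s) (j,False,0)))\<^sup>2 else 0) +
       (if True = gg m s then (cmod (qfinal (2^(2*m)) 1 (U0 (2*m)) [U1 m] (xs (2*m) s) (j,True,0)))\<^sup>2 else 0))"
    unfolding qprob_def sum_QI FF_xs[OF s] n by simp
  also have "\<dots> = (\<Sum>j<2^(2*m). if j = s then 1 else 0)"
  proof (intro sum.cong refl)
    fix j :: nat assume "j \<in> {..<2^(2*m)}"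
    then have j: "j < 2^(2*m)" by simp
    show "(if False = gg m s then (cmod (qfinal (2^(2*m)) 1 (U0 (2*m)) [U1 m] (xs (2*m) s) (j,False,0)))\<^sup>2 else 0) +
       (if True = gg m s then (cmod (qfinal (2^(2*m)) 1 (U0 (2*m)) [U1 m] (xs (2*m) s) (j,True,0)))\<^sup>2 else 0) =
       (if j = s then 1 else 0)"
      unfolding psi2[OF s' j] by (cases "gg m s"; cases "j = s") auto
  qed
  also have "\<dots> = 1" using s' by simp
  finally show ?thesis .
qed

definition WUQset :: "nat \<Rightarrow> bool list set \<Rightarrow> (bool list \<Rightarrow> bool) \<Rightarrow> real set" where
  "WUQset n X f = {real (length Us) + log 2 (1 / (2 * (p - 1/2))) | m U0 Us p.
      0 < m \<and> unitary_on (QI n m) U0 \<and> (\<forall>U \<in> set Us. unitary_on (QI n m) U) \<and>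
      1/2 < p \<and> p \<le> 1 \<and>
      (\<forall>x \<in> X. qprob n m U0 Us x (f x) \<ge> p)}"

lemma WUQ_eq: "WUQ n X f = Inf (WUQset n X f)"
  unfolding WUQ_def WUQset_def by (rule refl)

lemma WUQset_mem: "c \<in> WUQset n X f \<longleftrightarrow> (\<exists>m U0 Us p. c = real (length Us) + log 2 (1 / (2 * (p - 1/2))) \<and>
      0 < m \<and> unitary_on (QI n m) U0 \<and> (\<forall>U \<in> set Us. unitary_on (QI n m) U) \<and>
      1/2 < p \<and> p \<le> 1 \<and>
      (\<forall>x \<in> X. qprob n m U0 Us x (f x) \<ge> p))"
  unfolding WUQset_def by (rule mem_Collect_eq)

lemma log_term_nonneg: "1/2 < p \<Longrightarrow> p \<le> 1 \<Longrightarrow> 0 \<le> log 2 (1 / (2 * (p - 1/2)))"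
  by (simp add: field_simps)

lemma WUQ_upper: "WUQ (4^m) (XX m) (FF m) \<le> 1"
  unfolding WUQ_eq
proof (rule cInf_lower)
  have n: "(4::nat)^m = 2^(2*m)" by (simp add: power_mult)
  have "real (length [U1 m]) + log 2 (1 / (2 * (1 - 1/2))) \<in> WUQset (4^m) (XX m) (FF m)"
    unfolding WUQset_mem
  proof (intro exI conjI)
    show "(0::nat) < 1" by simp
    show "unitary_on (QI (4^m) 1) (U0 (2*m))" unfolding n U0_def by (rule unitary_Hm)
    show "\<forall>U \<in> set [U1 m]. unitary_on (QI (4^m) 1) U" unfolding n U1_def using unitary_Hm by simp
    show "\<forall>x \<in> XX m. qprob (4^m) 1 (U0 (2*m)) [U1 m] x (FF m x) \<ge> 1"
      unfolding XX_def using qprob_one by auto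
  qed auto
  then show "1 \<in> WUQset (4^m) (XX m) (FF m)" by simp
  show "bdd_below (WUQset (4^m) (XX m) (FF m))"
  proof (rule bdd_belowI[of _ 0])
    fix c assume "c \<in> WUQset (4^m) (XX m) (FF m)"
    then obtain Us :: "(qidx \<Rightarrow> qidx \<Rightarrow> complex) list" and p :: real where "c = real (length Us) + log 2 (1 / (2 * (p - 1/2)))" "1/2 < p" "p \<le> 1"
      unfolding WUQset_mem by blast
    then show "0 \<le> c" using log_term_nonneg[of p] by simp
  qed
qed

theorem lemma8:
  shows "\<exists>c C :: real. c > 0 \<and> C > 0 \<and>
    infinite {n :: nat. \<exists>(X :: bool list set) (f :: bool list \<Rightarrow> bool).
       X \<subseteq> {x. length x = n} \<and> WUQ n X f \<le> C \<and> WUC n X f \<ge> c * log 2 (real n)}"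
proof (intro exI conjI)
  show "(1/2::real) > 0" "(1::real) > 0" by simp_all
  have sub: "range (\<lambda>m::nat. (4::nat)^m) \<subseteq> {n :: nat. \<exists>(X :: bool list set) (f :: bool list \<Rightarrow> bool).
       X \<subseteq> {x. length x = n} \<and> WUQ n X f \<le> 1 \<and> WUC n X f \<ge> 1/2 * log 2 (real n)}"
  proof
    fix n :: nat assume "n \<in> range (\<lambda>m::nat. (4::nat)^m)"
    then obtain m where nm: "n = 4^m" by blast
    have "real n = 2 ^ (2 * m)" unfolding nm by (simp add: power_mult)
    then have "log 2 (real n) = real (2 * m)" using log_pow_cancel[of "2::real" "2*m"] by simp
    then have "log 2 (real n) = 2 * real m" by simp
    then have "1/2 * log 2 (real n) = real m" by simp
    then show "n \<in> {n :: nat. \<exists>(X :: bool list set) (f :: bool list \<Rightarrow> bool).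
       X \<subseteq> {x. length x = n} \<and> WUQ n X f \<le> 1 \<and> WUC n X f \<ge> 1/2 * log 2 (real n)}"
      using XX_len[of m] WUQ_upper[of m] WUC_lower[of m] unfolding nm by auto
  qed
  have "infinite (range (\<lambda>m::nat. (4::nat)^m))"
    by (rule range_inj_infinite) (simp add: inj_on_def)
  then show "infinite {n :: nat. \<exists>(X :: bool list set) (f :: bool list \<Rightarrow> bool).
       X \<subseteq> {x. length x = n} \<and> WUQ n X f \<le> 1 \<and> WUC n X f \<ge> 1/2 * log 2 (real n)}"
    using sub infinite_super by blast
qed

end
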